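(* Let $T$ be a complete theory with monster model $\mathcal{U}$, $A\subseteq\mathcal{U}$ small, $r,s\in[0,1]$ with $r+s=1$, $p\in S_x(\mathcal{U})$, and $\nu_1,\nu_2\in\mathfrak{M}_y(\mathcal{U})$ with $\operatorname{supp}(\nu_1)\cap\operatorname{supp}(\nu_2)=\emptyset$. If $\delta_p\geq_{\mathbb{E},A}\nu_1$ and $\delta_p\geq_{\mathbb{E},A}\nu_2$, then $\delta_p\geq_{\mathbb{E},Ab}r\nu_1+s\nu_2$ for some finite tuple $b$ from $\mathcal{U}$. In particular, if $q_1,\dots,q_n\in S_y(\mathcal{U})$ and $p\geq_{D,A}q_i$ for $i=1,\dots,n$, then there is a finite tuple $b$ from $\mathcal{U}$ such that $\delta_p\geq_{\mathbb{E},Ab}\sum_{i=1}^n r_i\delta_{q_i}$ for $r_i\geq0$ with $\sum_{i=1}^n r_i=1$.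
   Context: For $C\subseteq\mathcal{U}$, $\mathcal{L}_x(C)$ is the Boolean algebra of formulas in $x$ with parameters from $C$ modulo $T$, embedded in $\mathcal{L}_{xy}(C)$ via $\varphi(x)\mapsto\varphi(x)\wedge y=y$; $\mathfrak{M}_x(C)$ is the set of finitely additive probability measures on $\mathcal{L}_x(C)$. For $\omega\in\mathfrak{M}_{xy}(C)$, $\pi_x(\omega)(\varphi(x))=\omega(\varphi(x)\wedge y=y)$ (similarly $\pi_y$); $\omega|_D$ is restriction. $\delta_p$ is the Dirac measure of a type $p$. $\operatorname{supp}(\nu)$ is the set of $q\in S_y(\mathcal{U})$ with $\nu(\psi)>0$ for all $\psi\in q$. For small $C$, $\mu\geq_{\mathbb{E},C}\nu$ means there is $\lambda\in\mathfrak{M}_{xy}(C)$ with $\pi_x(\lambda)=\mu|_C$ such that every $\omega\in\mathfrak{M}_{xy}(\mathcal{U})$ with $\omega|_C=\lambda$ and $\pi_x(\omega)=\mu$ satisfies $\pi_y(\omega)=\nu$. $p\geq_{D,A}q$ means there is $r\in S_{xy}(A)$ with $p|_A\subseteq r$ and $p\cup r\vdash q$. $Ab$ denotes $A$ together with the entries of $b$. *)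

theory Defs
  imports Complex_Main
begin

datatype ('f, 'r) tm = Var nat | Fn 'f "('f, 'r) tm list"

datatype ('f, 'r) fm =
    Eq "('f, 'r) tm" "('f, 'r) tm"
  | Rel 'r "('f, 'r) tm list"
  | Neg "('f, 'r) fm"
  | Conj "('f, 'r) fm" "('f, 'r) fm"
  | Ex nat "('f, 'r) fm"

fun fv_tm :: "('f, 'r) tm \<Rightarrow> nat set" where
  "fv_tm (Var i) = {i}"
| "fv_tm (Fn f ts) = (\<Union>t\<in>set ts. fv_tm t)"

fun fv :: "('f, 'r) fm \<Rightarrow> nat set" where
  "fv (Eq s t) = fv_tm s \<union> fv_tm t"
| "fv (Rel R ts) = (\<Union>t\<in>set ts. fv_tm t)"
| "fv (Neg \<phi>) = fv \<phi>"
| "fv (Conj \<phi> \<psi>) = fv \<phi> \<union> fv \<psi>"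
| "fv (Ex x \<phi>) = fv \<phi> - {x}"

type_synonym ('f, 'r, 'u) struct = "('f \<Rightarrow> 'u list \<Rightarrow> 'u) \<times> ('r \<Rightarrow> 'u list \<Rightarrow> bool)"

fun eval_tm :: "('f, 'r, 'u) struct \<Rightarrow> (nat \<Rightarrow> 'u) \<Rightarrow> ('f, 'r) tm \<Rightarrow> 'u" where
  "eval_tm M e (Var i) = e i"
| "eval_tm M e (Fn f ts) = fst M f (map (eval_tm M e) ts)"

fun sat :: "('f, 'r, 'u) struct \<Rightarrow> (nat \<Rightarrow> 'u) \<Rightarrow> ('f, 'r) fm \<Rightarrow> bool" where
  "sat M e (Eq s t) = (eval_tm M e s = eval_tm M e t)"
| "sat M e (Rel R ts) = snd M R (map (eval_tm M e) ts)"
| "sat M e (Neg \<phi>) = (\<not> sat M e \<phi>)"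
| "sat M e (Conj \<phi> \<psi>) = (sat M e \<phi> \<and> sat M e \<psi>)"
| "sat M e (Ex x \<phi>) = (\<exists>a. sat M (e(x := a)) \<phi>)"

definition tuples :: "nat \<Rightarrow> 'u list set" where
  "tuples n = {a. length a = n}"

text \<open>Modulo T (= Th(U)), formulas in x with parameters from C are
  identified with the sets they define in the monster model, so this set of sets is the
  Boolean algebra L_x(C).\<close>
definition Dset :: "('f, 'r, 'u) struct \<Rightarrow> nat \<Rightarrow> 'u set \<Rightarrow> 'u list set set" where
  "Dset M n C = {X. \<exists>(\<phi>::('f,'r) fm) c. set c \<subseteq> C \<and> fv \<phi> \<subseteq> {..<n + length c} \<and>
       X = {a. length a = n \<and> sat M (\<lambda>i. (a @ c) ! i) \<phi>}}"

definition elementary_on :: "('f, 'r, 'u) struct \<Rightarrow> 'u set \<Rightarrow> ('u \<Rightarrow> 'u) \<Rightarrow> bool" where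
  "elementary_on M B h \<longleftrightarrow> (\<forall>(\<phi>::('f,'r) fm) c. set c \<subseteq> B \<longrightarrow> fv \<phi> \<subseteq> {..<length c} \<longrightarrow>
       (sat M (\<lambda>i. c ! i) \<phi> \<longleftrightarrow> sat M (\<lambda>i. map h c ! i) \<phi>))"

definition automorphism :: "('f, 'r, 'u) struct \<Rightarrow> ('u \<Rightarrow> 'u) \<Rightarrow> bool" where
  "automorphism M g \<longleftrightarrow> bij g \<and> (\<forall>f l. g (fst M f l) = fst M f (map g l)) \<and>
       (\<forall>R l. snd M R (map g l) = snd M R l)"

text \<open>M is a monster model with respect to the cardinal |K|: |K| exceeds the size of the
  language, M is |K|-saturated and strongly |K|-homogeneous. "Small" means of size < |K|.\<close>
definition small :: "'k set \<Rightarrow> 'u set \<Rightarrow> bool" where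
  "small K B \<longleftrightarrow> ordLess2 (card_of B) (card_of K)"

definition monster :: "('f, 'r, 'u) struct \<Rightarrow> 'k set \<Rightarrow> bool" where
  "monster M K \<longleftrightarrow>
     ordLess2 (card_of (UNIV :: ('f,'r) fm set)) (card_of K) \<and>
     (\<forall>B n \<Phi>. small K B \<longrightarrow> \<Phi> \<subseteq> Dset M n B \<longrightarrow>
        (\<forall>F. F \<subseteq> \<Phi> \<longrightarrow> finite F \<longrightarrow> \<Inter>F \<inter> tuples n \<noteq> {}) \<longrightarrow> \<Inter>\<Phi> \<inter> tuples n \<noteq> {}) \<and>
     (\<forall>B h. small K B \<longrightarrow> elementary_on M B h \<longrightarrow>
        (\<exists>g. automorphism M g \<and> (\<forall>b\<in>B. g b = h b)))"

text \<open>A complete type in n variables over B: an ultrafilter of the Boolean algebra L_x(B).\<close>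
definition is_type :: "('f, 'r, 'u) struct \<Rightarrow> nat \<Rightarrow> 'u set \<Rightarrow> 'u list set set \<Rightarrow> bool" where
  "is_type M n B p \<longleftrightarrow> p \<subseteq> Dset M n B \<and> tuples n \<in> p \<and> {} \<notin> p \<and>
     (\<forall>X\<in>p. \<forall>Y\<in>p. X \<inter> Y \<in> p) \<and>
     (\<forall>X\<in>p. \<forall>Y\<in>Dset M n B. X \<subseteq> Y \<longrightarrow> Y \<in> p) \<and>
     (\<forall>X\<in>Dset M n B. X \<in> p \<or> tuples n - X \<in> p)"

text \<open>A finitely additive probability measure on L_x(C) (values outside are irrelevant).\<close>
definition kmeasure :: "('f, 'r, 'u) struct \<Rightarrow> nat \<Rightarrow> 'u set \<Rightarrow> ('u list set \<Rightarrow> real) \<Rightarrow> bool" where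
  "kmeasure M n C \<mu> \<longleftrightarrow> \<mu> (tuples n) = 1 \<and> (\<forall>X\<in>Dset M n C. 0 \<le> \<mu> X) \<and>
     (\<forall>X\<in>Dset M n C. \<forall>Y\<in>Dset M n C. X \<inter> Y = {} \<longrightarrow> \<mu> (X \<union> Y) = \<mu> X + \<mu> Y)"

definition meq :: "('f, 'r, 'u) struct \<Rightarrow> nat \<Rightarrow> 'u set \<Rightarrow> ('u list set \<Rightarrow> real) \<Rightarrow> ('u list set \<Rightarrow> real) \<Rightarrow> bool" where
  "meq M n C \<mu> \<nu> \<longleftrightarrow> (\<forall>X\<in>Dset M n C. \<mu> X = \<nu> X)"

text \<open>Projections of a measure in variables xy (|x| = n, |y| = m): phi(x) is embedded as
  phi(x) and y=y, i.e. as the cylinder over X.\<close>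
definition pi_x :: "nat \<Rightarrow> nat \<Rightarrow> ('u list set \<Rightarrow> real) \<Rightarrow> ('u list set \<Rightarrow> real)" where
  "pi_x n m \<omega> X = \<omega> {ab. length ab = n + m \<and> take n ab \<in> X}"

definition pi_y :: "nat \<Rightarrow> nat \<Rightarrow> ('u list set \<Rightarrow> real) \<Rightarrow> ('u list set \<Rightarrow> real)" where
  "pi_y n m \<omega> Y = \<omega> {ab. length ab = n + m \<and> drop n ab \<in> Y}"

definition dirac :: "'u list set set \<Rightarrow> ('u list set \<Rightarrow> real)" where
  "dirac p X = (if X \<in> p then 1 else 0)"

definition supp :: "('f, 'r, 'u) struct \<Rightarrow> nat \<Rightarrow> ('u list set \<Rightarrow> real) \<Rightarrow> 'u list set set set" where
  "supp M m \<nu> = {q. is_type M m UNIV q \<and> (\<forall>\<psi>\<in>q. \<nu> \<psi> > 0)}"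

definition E_dom :: "('f, 'r, 'u) struct \<Rightarrow> nat \<Rightarrow> nat \<Rightarrow> 'u set \<Rightarrow>
    ('u list set \<Rightarrow> real) \<Rightarrow> ('u list set \<Rightarrow> real) \<Rightarrow> bool" where
  "E_dom M n m C \<mu> \<nu> \<longleftrightarrow>
     (\<exists>lam. kmeasure M (n + m) C lam \<and> meq M n C (pi_x n m lam) \<mu> \<and>
        (\<forall>\<omega>. kmeasure M (n + m) UNIV \<omega> \<and> meq M (n + m) C \<omega> lam \<and>
              meq M n UNIV (pi_x n m \<omega>) \<mu> \<longrightarrow> meq M m UNIV (pi_y n m \<omega>) \<nu>))"

text \<open>p \<ge>_{D,A} q: some r in S_xy(A) contains p|_A (embedded as cylinders) and p \<union> r \<turnstile> q;
  by compactness (p, r closed under conjunction), p \<union> r \<turnstile> psi iff some phi in p and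
  theta in r satisfy  phi(x) and theta(x,y) \<rightarrow> psi(y)  in U.\<close>
definition D_dom :: "('f, 'r, 'u) struct \<Rightarrow> nat \<Rightarrow> nat \<Rightarrow> 'u set \<Rightarrow>
    'u list set set \<Rightarrow> 'u list set set \<Rightarrow> bool" where
  "D_dom M n m A p q \<longleftrightarrow>
     (\<exists>r. is_type M (n + m) A r \<and>
        (\<forall>X\<in>p \<inter> Dset M n A. {ab. length ab = n + m \<and> take n ab \<in> X} \<in> r) \<and>
        (\<forall>Y\<in>q. \<exists>X\<in>p. \<exists>Z\<in>r.
            {ab. length ab = n + m \<and> take n ab \<in> X} \<inter> Z \<subseteq> {ab. drop n ab \<in> Y}))"

end

theory Submission
  imports Defs
begin


lemma eval_tm_cong: "(\<forall>i\<in>fv_tm t. e i = e' i) \<Longrightarrow> eval_tm M e t = eval_tm M e' t"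
proof (induction t)
  case (Var x) then show ?case by simp
next
  case (Fn f ts)
  have "map (eval_tm M e) ts = map (eval_tm M e') ts"
  proof (rule map_cong)
    fix x assume "x \<in> set ts" then show "eval_tm M e x = eval_tm M e' x"
      using Fn.IH Fn.prems by auto
  qed simp
  then show ?case by (simp only: eval_tm.simps)
qed

lemma sat_cong: "(\<forall>i\<in>fv \<phi>. e i = e' i) \<Longrightarrow> sat M e \<phi> = sat M e' \<phi>"
proof (induction \<phi> arbitrary: e e')
  case (Eq s t) then show ?case using eval_tm_cong[of s e e' M] eval_tm_cong[of t e e' M] by simp
next
  case (Rel R ts)
  have "map (eval_tm M e) ts = map (eval_tm M e') ts"
  proof (rule map_cong)
    fix x assume "x \<in> set ts" then show "eval_tm M e x = eval_tm M e' x"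
      using Rel eval_tm_cong[of x e e' M] by auto
  qed simp
  then show ?case by (simp only: sat.simps)
next
  case (Neg \<phi>) then show ?case by simp
next
  case (Conj \<phi> \<psi>)
  have "sat M e \<phi> = sat M e' \<phi>" "sat M e \<psi> = sat M e' \<psi>"
    using Conj.prems by (auto intro!: Conj.IH)
  then show ?case by simp
next
  case (Ex x \<phi>)
  have "\<And>a. sat M (e(x := a)) \<phi> = sat M (e'(x := a)) \<phi>"
    using Ex by (intro Ex.IH) auto
  then show ?case by simp
qed

fun rtm :: "(nat \<Rightarrow> nat) \<Rightarrow> ('f, 'r) tm \<Rightarrow> ('f, 'r) tm" where
  "rtm g (Var i) = Var (g i)"
| "rtm g (Fn f ts) = Fn f (map (rtm g) ts)"

fun rfm :: "(nat \<Rightarrow> nat) \<Rightarrow> ('f, 'r) fm \<Rightarrow> ('f, 'r) fm" where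
  "rfm g (Eq s t) = Eq (rtm g s) (rtm g t)"
| "rfm g (Rel R ts) = Rel R (map (rtm g) ts)"
| "rfm g (Neg \<phi>) = Neg (rfm g \<phi>)"
| "rfm g (Conj \<phi> \<psi>) = Conj (rfm g \<phi>) (rfm g \<psi>)"
| "rfm g (Ex x \<phi>) = Ex (g x) (rfm g \<phi>)"

lemma eval_rtm: "eval_tm M e (rtm g t) = eval_tm M (e \<circ> g) t"
proof (induction t)
  case (Fn f ts)
  have "map (eval_tm M e \<circ> rtm g) ts = map (eval_tm M (e \<circ> g)) ts"
    by (rule map_cong) (use Fn in \<open>auto simp: comp_def\<close>)
  then show ?case by (simp only: eval_tm.simps rtm.simps map_map)
qed simp

lemma fv_rtm: "fv_tm (rtm g t) = g ` fv_tm t"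
  by (induction t) auto

lemma sat_rfm: "inj g \<Longrightarrow> sat M e (rfm g \<phi>) = sat M (e \<circ> g) \<phi>"
proof (induction \<phi> arbitrary: e)
  case (Ex x \<phi>)
  have "\<And>a. (e(g x := a)) \<circ> g = (e \<circ> g)(x := a)"
    using Ex.prems by (auto simp: inj_eq fun_eq_iff)
  then have "\<And>a. sat M (e(g x := a)) (rfm g \<phi>) = sat M ((e \<circ> g)(x := a)) \<phi>"
    using Ex.IH[OF Ex.prems] by metis
  then show ?case by (simp only: rfm.simps sat.simps)
qed (auto simp: eval_rtm comp_def)

lemma fv_rfm: "inj g \<Longrightarrow> fv (rfm g \<phi>) = g ` fv \<phi>"
proof (induction \<phi>)
  case (Ex x \<phi>)
  then show ?case by (simp add: image_set_diff)
qed (auto simp: fv_rtm)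



lemma Dset_I:
  fixes \<phi> :: "('f,'r) fm" and M :: "('f,'r,'u) struct"
  assumes "set c \<subseteq> C" "fv \<phi> \<subseteq> {..<k + length c}"
    "\<And>a. length a = k \<Longrightarrow> (a \<in> X \<longleftrightarrow> sat M (\<lambda>i. (a @ c) ! i) \<phi>)" "X \<subseteq> tuples k"
  shows "X \<in> Dset M k C"
proof -
  have "X = {a. length a = k \<and> sat M (\<lambda>i. (a @ c) ! i) \<phi>}"
    using assms(3,4) by (auto simp: tuples_def)
  then show ?thesis unfolding Dset_def using assms(1,2) by blast
qed

lemma Dset_E:
  fixes M :: "('f,'r,'u) struct"
  assumes "X \<in> Dset M k C"
  obtains \<phi> :: "('f,'r) fm" and c where "set c \<subseteq> C" "fv \<phi> \<subseteq> {..<k + length c}"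
    "X = {a. length a = k \<and> sat M (\<lambda>i. (a @ c) ! i) \<phi>}"
  using assms unfolding Dset_def by blast

lemma Dset_sub: "X \<in> Dset M k C \<Longrightarrow> X \<subseteq> tuples k"
  unfolding Dset_def tuples_def by auto

lemma Dset_mono: "C \<subseteq> C' \<Longrightarrow> Dset M k C \<subseteq> Dset M k C'"
  unfolding Dset_def by blast

lemma Dset_tuples: "tuples k \<in> Dset M k C"
proof (rule Dset_I[where c = "[]" and \<phi> = "Neg (Ex 0 (Neg (Eq (Var 0) (Var 0))))"])
qed (auto simp: tuples_def)

lemma Dset_compl:
  assumes "X \<in> Dset M k C" shows "tuples k - X \<in> Dset M k C"
proof -
  obtain \<phi> c where h: "set c \<subseteq> C" "fv \<phi> \<subseteq> {..<k + length c}"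
    "X = {a. length a = k \<and> sat M (\<lambda>i. (a @ c) ! i) \<phi>}" using Dset_E[OF assms] by metis
  show ?thesis
    by (rule Dset_I[where c = c and \<phi> = "Neg \<phi>"]) (use h in \<open>auto simp: tuples_def\<close>)
qed

lemma Dset_int:
  assumes "X \<in> Dset M k C" "Y \<in> Dset M k C" shows "X \<inter> Y \<in> Dset M k C"
proof -
  obtain \<phi>1 c1 where h1: "set c1 \<subseteq> C" "fv \<phi>1 \<subseteq> {..<k + length c1}"
    "X = {a. length a = k \<and> sat M (\<lambda>i. (a @ c1) ! i) \<phi>1}" using Dset_E[OF assms(1)] by metis
  obtain \<phi>2 c2 where h2: "set c2 \<subseteq> C" "fv \<phi>2 \<subseteq> {..<k + length c2}"
    "Y = {a. length a = k \<and> sat M (\<lambda>i. (a @ c2) ! i) \<phi>2}" using Dset_E[OF assms(2)] by metis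
  define g where "g i = (if i < k then i else i + length c1)" for i
  have ig: "inj g" by (auto simp: inj_on_def g_def split: if_splits)
  show ?thesis
  proof (rule Dset_I[where c = "c1 @ c2" and \<phi> = "Conj \<phi>1 (rfm g \<phi>2)"])
    show "set (c1 @ c2) \<subseteq> C" using h1 h2 by auto
    show "fv (Conj \<phi>1 (rfm g \<phi>2)) \<subseteq> {..<k + length (c1 @ c2)}"
      using h1(2) h2(2) by (auto simp: fv_rfm[OF ig] g_def)
    show "X \<inter> Y \<subseteq> tuples k" using h1 by (auto simp: tuples_def)
    fix a :: "'a list" assume la: "length a = k"
    have e1: "sat M (\<lambda>i. (a @ c1 @ c2) ! i) \<phi>1 = sat M (\<lambda>i. (a @ c1) ! i) \<phi>1"
    proof (rule sat_cong, intro ballI)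
      fix i assume "i \<in> fv \<phi>1" then have "i < length (a @ c1)" using h1(2) la by auto
      then show "(a @ c1 @ c2) ! i = (a @ c1) ! i"
        by (metis append_assoc nth_append)
    qed
    have e2: "sat M (\<lambda>i. (a @ c1 @ c2) ! i) (rfm g \<phi>2) = sat M (\<lambda>i. (a @ c2) ! i) \<phi>2"
      unfolding sat_rfm[OF ig]
    proof (rule sat_cong, intro ballI)
      fix i assume "i \<in> fv \<phi>2" then have "i < k + length c2" using h2(2) by auto
      then show "((\<lambda>i. (a @ c1 @ c2) ! i) \<circ> g) i = (a @ c2) ! i"
        using la by (auto simp: g_def nth_append)
    qed
    show "(a \<in> X \<inter> Y) = sat M (\<lambda>i. (a @ c1 @ c2) ! i) (Conj \<phi>1 (rfm g \<phi>2))"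
      using e1 e2 h1(3) h2(3) la by simp
  qed
qed

lemma Dset_diff: "X \<in> Dset M k C \<Longrightarrow> Y \<in> Dset M k C \<Longrightarrow> X - Y \<in> Dset M k C"
proof -
  assume a: "X \<in> Dset M k C" "Y \<in> Dset M k C"
  then have "X - Y = X \<inter> (tuples k - Y)" using Dset_sub by blast
  then show ?thesis using a Dset_int Dset_compl by metis
qed

lemma Dset_Un: "X \<in> Dset M k C \<Longrightarrow> Y \<in> Dset M k C \<Longrightarrow> X \<union> Y \<in> Dset M k C"
proof -
  assume a: "X \<in> Dset M k C" "Y \<in> Dset M k C"
  then have "X \<union> Y = tuples k - ((tuples k - X) \<inter> (tuples k - Y))" using Dset_sub by blast
  then show ?thesis using a Dset_int Dset_compl by metis
qed

lemma Dset_params: "X \<in> Dset M k UNIV \<Longrightarrow> \<exists>c. X \<in> Dset M k (set c)"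
  unfolding Dset_def by blast

definition cylx :: "nat \<Rightarrow> nat \<Rightarrow> 'u list set \<Rightarrow> 'u list set" where
  "cylx n m X = {ab. length ab = n + m \<and> take n ab \<in> X}"

definition cyly :: "nat \<Rightarrow> nat \<Rightarrow> 'u list set \<Rightarrow> 'u list set" where
  "cyly n m Y = {ab. length ab = n + m \<and> drop n ab \<in> Y}"

lemma pi_x_cyl: "pi_x n m \<omega> X = \<omega> (cylx n m X)" unfolding pi_x_def cylx_def by simp
lemma pi_y_cyl: "pi_y n m \<omega> X = \<omega> (cyly n m X)" unfolding pi_y_def cyly_def by simp

lemma Dset_cylx:
  assumes "X \<in> Dset M n C" shows "cylx n m X \<in> Dset M (n + m) C"
proof -
  obtain \<phi> c where h: "set c \<subseteq> C" "fv \<phi> \<subseteq> {..<n + length c}"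
    "X = {a. length a = n \<and> sat M (\<lambda>i. (a @ c) ! i) \<phi>}" using Dset_E[OF assms] by metis
  define g where "g i = (if i < n then i else i + m)" for i
  have ig: "inj g" by (auto simp: inj_on_def g_def split: if_splits)
  show ?thesis
  proof (rule Dset_I[where c = "c" and \<phi> = "rfm g \<phi>"])
    show "set c \<subseteq> C" using h by auto
    show "fv (rfm g \<phi>) \<subseteq> {..<n + m + length c}"
      using h(2) by (auto simp: fv_rfm[OF ig] g_def)
    show "cylx n m X \<subseteq> tuples (n + m)" by (auto simp: tuples_def cylx_def)
    fix a :: "'a list" assume la: "length a = n + m"
    have e2: "sat M (\<lambda>i. (a @ c) ! i) (rfm g \<phi>) = sat M (\<lambda>i. (take n a @ c) ! i) \<phi>"
      unfolding sat_rfm[OF ig]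
    proof (rule sat_cong, intro ballI)
      fix i assume "i \<in> fv \<phi>" then have "i < n + length c" using h(2) by auto
      then show "((\<lambda>i. (a @ c) ! i) \<circ> g) i = (take n a @ c) ! i"
        using la by (auto simp: g_def nth_append)
    qed
    show "(a \<in> cylx n m X) = sat M (\<lambda>i. (a @ c) ! i) (rfm g \<phi>)"
      using e2 h(3) la by (simp add: cylx_def)
  qed
qed

lemma Dset_cyly:
  assumes "Y \<in> Dset M m C" shows "cyly n m Y \<in> Dset M (n + m) C"
proof -
  obtain \<phi> c where h: "set c \<subseteq> C" "fv \<phi> \<subseteq> {..<m + length c}"
    "Y = {a. length a = m \<and> sat M (\<lambda>i. (a @ c) ! i) \<phi>}" using Dset_E[OF assms] by metis
  define g where "g i = i + n" for i
  have ig: "inj g" by (auto simp: inj_on_def g_def)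
  show ?thesis
  proof (rule Dset_I[where c = "c" and \<phi> = "rfm g \<phi>"])
    show "set c \<subseteq> C" using h by auto
    show "fv (rfm g \<phi>) \<subseteq> {..<n + m + length c}"
      using h(2) by (auto simp: fv_rfm[OF ig] g_def)
    show "cyly n m Y \<subseteq> tuples (n + m)" by (auto simp: tuples_def cyly_def)
    fix a :: "'a list" assume la: "length a = n + m"
    have e2: "sat M (\<lambda>i. (a @ c) ! i) (rfm g \<phi>) = sat M (\<lambda>i. (drop n a @ c) ! i) \<phi>"
      unfolding sat_rfm[OF ig]
    proof (rule sat_cong, intro ballI)
      fix i assume "i \<in> fv \<phi>" then have "i < m + length c" using h(2) by auto
      then show "((\<lambda>i. (a @ c) ! i) \<circ> g) i = (drop n a @ c) ! i"
        using la by (auto simp: g_def nth_append add.commute)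
    qed
    show "(a \<in> cyly n m Y) = sat M (\<lambda>i. (a @ c) ! i) (rfm g \<phi>)"
      using e2 h(3) la by (simp add: cyly_def)
  qed
qed

lemma cyly_compl: "cyly n m (tuples m - Y) = tuples (n + m) - cyly n m Y"
  by (auto simp: cyly_def tuples_def)

lemma cyly_sub: "cyly n m Y \<subseteq> tuples (n + m)" by (auto simp: cyly_def tuples_def)
lemma cylx_sub: "cylx n m Y \<subseteq> tuples (n + m)" by (auto simp: cylx_def tuples_def)



context
  fixes M :: "('f,'r,'u) struct" and k :: nat and C :: "'u set" and \<mu> :: "'u list set \<Rightarrow> real"
  assumes km: "kmeasure M k C \<mu>"
begin

lemma km_add: "X \<in> Dset M k C \<Longrightarrow> Y \<in> Dset M k C \<Longrightarrow> X \<inter> Y = {} \<Longrightarrow> \<mu> (X \<union> Y) = \<mu> X + \<mu> Y"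
  using km unfolding kmeasure_def by blast

lemma km_nn: "X \<in> Dset M k C \<Longrightarrow> 0 \<le> \<mu> X"
  using km unfolding kmeasure_def by blast

lemma km_T: "\<mu> (tuples k) = 1"
  using km unfolding kmeasure_def by blast

lemma km_diff: "X \<in> Dset M k C \<Longrightarrow> Y \<in> Dset M k C \<Longrightarrow> \<mu> X = \<mu> (X \<inter> Y) + \<mu> (X - Y)"
proof -
  assume a: "X \<in> Dset M k C" "Y \<in> Dset M k C"
  have "X = (X \<inter> Y) \<union> (X - Y)" by blast
  then have "\<mu> X = \<mu> ((X \<inter> Y) \<union> (X - Y))" by simp
  also have "\<dots> = \<mu> (X \<inter> Y) + \<mu> (X - Y)"
    by (rule km_add) (auto intro: Dset_int[OF a] Dset_diff[OF a])
  finally show ?thesis .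
qed

lemma km_mono: "X \<in> Dset M k C \<Longrightarrow> Y \<in> Dset M k C \<Longrightarrow> X \<subseteq> Y \<Longrightarrow> \<mu> X \<le> \<mu> Y"
proof -
  assume a: "X \<in> Dset M k C" "Y \<in> Dset M k C" "X \<subseteq> Y"
  have "\<mu> Y = \<mu> (Y \<inter> X) + \<mu> (Y - X)" using km_diff[OF a(2) a(1)] .
  moreover have "Y \<inter> X = X" using a by blast
  moreover have "0 \<le> \<mu> (Y - X)" by (rule km_nn[OF Dset_diff[OF a(2) a(1)]])
  ultimately show ?thesis by simp
qed

lemma km_compl: "X \<in> Dset M k C \<Longrightarrow> \<mu> (tuples k - X) = 1 - \<mu> X"
proof -
  assume a: "X \<in> Dset M k C"
  have "\<mu> (tuples k) = \<mu> (tuples k \<inter> X) + \<mu> (tuples k - X)"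
    using km_diff[OF Dset_tuples a] .
  moreover have "tuples k \<inter> X = X" using Dset_sub[OF a] by blast
  ultimately show ?thesis using km_T by simp
qed

lemma km_le1: "X \<in> Dset M k C \<Longrightarrow> \<mu> X \<le> 1"
proof -
  assume a: "X \<in> Dset M k C"
  have "0 \<le> \<mu> (tuples k - X)" by (rule km_nn[OF Dset_compl[OF a]])
  then show ?thesis using km_compl[OF a] by simp
qed

lemma km_int1: "X \<in> Dset M k C \<Longrightarrow> Y \<in> Dset M k C \<Longrightarrow> \<mu> Y = 1 \<Longrightarrow> \<mu> (X \<inter> Y) = \<mu> X"
proof -
  assume a: "X \<in> Dset M k C" "Y \<in> Dset M k C" "\<mu> Y = 1"
  have "\<mu> (X - Y) \<le> \<mu> (tuples k - Y)"
    using a Dset_sub[OF a(1)] by (intro km_mono Dset_diff Dset_compl Dset_tuples) auto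
  also have "\<dots> = 0" using km_compl a by simp
  finally have "\<mu> (X - Y) \<le> 0" .
  moreover have "0 \<le> \<mu> (X - Y)" by (rule km_nn[OF Dset_diff[OF a(1,2)]])
  ultimately have "\<mu> (X - Y) = 0" by simp
  then show ?thesis using km_diff[OF a(1,2)] by simp
qed

lemma km_int0: "X \<in> Dset M k C \<Longrightarrow> Y \<in> Dset M k C \<Longrightarrow> \<mu> Y = 0 \<Longrightarrow> \<mu> (X \<inter> Y) = 0"
proof -
  assume a: "X \<in> Dset M k C" "Y \<in> Dset M k C" "\<mu> Y = 0"
  have "\<mu> (X \<inter> Y) \<le> \<mu> Y" using a by (intro km_mono Dset_int) auto
  moreover have "0 \<le> \<mu> (X \<inter> Y)" by (rule km_nn[OF Dset_int[OF a(1,2)]])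
  ultimately show ?thesis using a(3) by simp
qed

end

lemma kmeasure_mono:
  assumes km: "kmeasure M k C' \<mu>" and CC: "C \<subseteq> C'" shows "kmeasure M k C \<mu>"
proof -
  have sub: "\<And>X. X \<in> Dset M k C \<Longrightarrow> X \<in> Dset M k C'" using Dset_mono[OF CC] by blast
  have h1: "\<mu> (tuples k) = 1" using km by (simp add: kmeasure_def)
  have h2: "\<And>X. X \<in> Dset M k C' \<Longrightarrow> 0 \<le> \<mu> X" using km by (simp add: kmeasure_def)
  have h3: "\<And>X Y. X \<in> Dset M k C' \<Longrightarrow> Y \<in> Dset M k C' \<Longrightarrow> X \<inter> Y = {} \<Longrightarrow> \<mu> (X \<union> Y) = \<mu> X + \<mu> Y"
    using km by (simp add: kmeasure_def)
  show ?thesis unfolding kmeasure_def using h1 h2 h3 sub by simp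
qed

lemma kmeasure_conv:
  assumes "kmeasure M k C \<mu>1" "kmeasure M k C \<mu>2" "0 \<le> r" "0 \<le> s" "r + s = 1"
  shows "kmeasure M k C (\<lambda>X. r * \<mu>1 X + s * \<mu>2 X)"
  using assms unfolding kmeasure_def by (simp add: distrib_left)

lemma dirac_kmeasure:
  assumes q: "is_type M k C q" shows "kmeasure M k C (dirac q)"
proof -
  have sub: "q \<subseteq> Dset M k C" and T: "tuples k \<in> q" and E: "{} \<notin> q"
    and I: "\<And>X Y. X \<in> q \<Longrightarrow> Y \<in> q \<Longrightarrow> X \<inter> Y \<in> q"
    and U: "\<And>X Y. X \<in> q \<Longrightarrow> Y \<in> Dset M k C \<Longrightarrow> X \<subseteq> Y \<Longrightarrow> Y \<in> q"
    and Co: "\<And>X. X \<in> Dset M k C \<Longrightarrow> X \<in> q \<or> tuples k - X \<in> q"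
    using q unfolding is_type_def by blast+
  have add: "dirac q (X \<union> Y) = dirac q X + dirac q Y"
    if X: "X \<in> Dset M k C" and Y: "Y \<in> Dset M k C" and d: "X \<inter> Y = {}" for X Y
  proof -
    have XY: "X \<union> Y \<in> Dset M k C" using X Y Dset_Un by blast
    show ?thesis
    proof (cases "X \<in> q")
      case True
      have "Y \<notin> q"
      proof
        assume "Y \<in> q" then have "X \<inter> Y \<in> q" using I True by blast
        then show False using E d by simp
      qed
      moreover have "X \<union> Y \<in> q" using U True XY by blast
      ultimately show ?thesis using True by (simp add: dirac_def)
    next
      case nX: False
      show ?thesis
      proof (cases "Y \<in> q")
        case True
        moreover have "X \<union> Y \<in> q" using U True XY by blast
        ultimately show ?thesis using nX by (simp add: dirac_def)
      next
        case False
        then have "tuples k - X \<in> q" "tuples k - Y \<in> q" using Co X Y nX by blast+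
        then have i: "(tuples k - X) \<inter> (tuples k - Y) \<in> q" using I by blast
        have "X \<union> Y \<notin> q"
        proof
          assume "X \<union> Y \<in> q"
          then have "(X \<union> Y) \<inter> ((tuples k - X) \<inter> (tuples k - Y)) \<in> q" using I i by blast
          moreover have "(X \<union> Y) \<inter> ((tuples k - X) \<inter> (tuples k - Y)) = {}" by blast
          ultimately show False using E by simp
        qed
        then show ?thesis using nX False by (simp add: dirac_def)
      qed
    qed
  qed
  have "dirac q (tuples k) = 1" using T by (simp add: dirac_def)
  moreover have "\<forall>X\<in>Dset M k C. 0 \<le> dirac q X" by (simp add: dirac_def)
  ultimately show ?thesis unfolding kmeasure_def using add by blast
qed



definition fipk :: "nat \<Rightarrow> 'u list set set \<Rightarrow> bool" where
  "fipk k H \<longleftrightarrow> (\<forall>F. F \<subseteq> H \<longrightarrow> finite F \<longrightarrow> tuples k \<inter> \<Inter>F \<noteq> {})"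

lemma fipkD: "fipk k H \<Longrightarrow> F \<subseteq> H \<Longrightarrow> finite F \<Longrightarrow> tuples k \<inter> \<Inter>F \<noteq> {}"
  unfolding fipk_def by blast

lemma fip_insert:
  assumes "fipk k H" "F0 \<subseteq> H" "finite F0" "tuples k \<inter> \<Inter>F0 \<subseteq> Z"
  shows "fipk k (insert Z H)"
  unfolding fipk_def
proof (intro allI impI)
  fix F assume F: "F \<subseteq> insert Z H" "finite F"
  have "(F - {Z}) \<union> F0 \<subseteq> H" "finite ((F - {Z}) \<union> F0)" using F assms(2,3) by auto
  then have "tuples k \<inter> \<Inter>((F - {Z}) \<union> F0) \<noteq> {}" using assms(1) unfolding fipk_def by blast
  then obtain x where x: "x \<in> tuples k" "x \<in> \<Inter>((F - {Z}) \<union> F0)" by blast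
  then have "x \<in> Z" using assms(4) by blast
  then have "x \<in> tuples k \<inter> \<Inter>F" using x by blast
  then show "tuples k \<inter> \<Inter>F \<noteq> {}" by blast
qed

lemma ultra:
  fixes M :: "('f,'r,'u) struct"
  assumes G: "G \<subseteq> Dset M k UNIV" "fipk k G"
  shows "\<exists>q. is_type M k UNIV q \<and> G \<subseteq> q"
proof -
  let ?A = "{H. G \<subseteq> H \<and> H \<subseteq> Dset M k UNIV \<and> fipk k H}"
  have "\<exists>H\<in>?A. \<forall>X\<in>?A. H \<subseteq> X \<longrightarrow> X = H"
  proof (rule subset_Zorn_nonempty)
    show "?A \<noteq> {}" using G by blast
    fix \<C> assume ne: "\<C> \<noteq> {}" and ch: "subset.chain ?A \<C>"
    then have CA: "\<C> \<subseteq> ?A" by (simp add: subset.chain_def)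
    have "fipk k (\<Union>\<C>)" unfolding fipk_def
    proof (intro allI impI)
      fix F assume F: "F \<subseteq> \<Union>\<C>" "finite F"
      obtain B where "B \<in> \<C>" "F \<subseteq> B" using finite_subset_Union_chain[OF F(2) F(1) ne ch] by blast
      then have "fipk k B" using CA by blast
      then show "tuples k \<inter> \<Inter>F \<noteq> {}" using fipkD \<open>F \<subseteq> B\<close> F(2) by blast
    qed
    moreover have "G \<subseteq> \<Union>\<C>" using CA ne by blast
    moreover have "\<Union>\<C> \<subseteq> Dset M k UNIV" using CA by blast
    ultimately show "\<Union>\<C> \<in> ?A" by simp
  qed
  then obtain H where HA: "H \<in> ?A" and mx0: "\<forall>X\<in>?A. H \<subseteq> X \<longrightarrow> X = H" by (rule bexE)
  have H: "G \<subseteq> H" "H \<subseteq> Dset M k UNIV" "fipk k H" using HA by simp_all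
  have mx: "X = H" if "X \<in> ?A" "H \<subseteq> X" for X using mx0 that by simp
  have ins: "Z \<in> H" if "Z \<in> Dset M k UNIV" "fipk k (insert Z H)" for Z
  proof -
    have "insert Z H \<in> ?A" using that H by blast
    then have "insert Z H = H" using mx by blast
    then show ?thesis by blast
  qed
  have "fipk k (insert (tuples k) H)"
    by (rule fip_insert[OF H(3), of "{}"]) auto
  then have T: "tuples k \<in> H" using ins[OF Dset_tuples] by blast
  have E: "{} \<notin> H"
  proof
    assume "{} \<in> H" then show False using fipkD[OF H(3), of "{{}}"] by simp
  qed
  have I: "X \<inter> Y \<in> H" if "X \<in> H" "Y \<in> H" for X Y
  proof -
    have D: "X \<in> Dset M k UNIV" "Y \<in> Dset M k UNIV" using that H(2) by blast+
    have "fipk k (insert (X \<inter> Y) H)"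
      by (rule fip_insert[OF H(3), of "{X, Y}"]) (use that in blast)+
    then show ?thesis using ins[OF Dset_int[OF D]] by blast
  qed
  have U: "Y \<in> H" if "X \<in> H" "Y \<in> Dset M k UNIV" "X \<subseteq> Y" for X Y
  proof -
    have "fipk k (insert Y H)"
      by (rule fip_insert[OF H(3), of "{X}"]) (use that in blast)+
    then show ?thesis using ins[OF that(2)] by blast
  qed
  have Co: "X \<in> H \<or> tuples k - X \<in> H" if X: "X \<in> Dset M k UNIV" for X
  proof (rule ccontr)
    assume n: "\<not> (X \<in> H \<or> tuples k - X \<in> H)"
    then have "\<not> fipk k (insert X H)" using ins X by blast
    then obtain F1 where F1: "F1 \<subseteq> insert X H" "finite F1" "tuples k \<inter> \<Inter>F1 = {}"
      unfolding fipk_def by blast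
    have "\<not> fipk k (insert (tuples k - X) H)" using ins Dset_compl[OF X] n by blast
    then obtain F2 where F2: "F2 \<subseteq> insert (tuples k - X) H" "finite F2" "tuples k \<inter> \<Inter>F2 = {}"
      unfolding fipk_def by blast
    let ?F = "(F1 - {X}) \<union> (F2 - {tuples k - X})"
    have "?F \<subseteq> H" "finite ?F" using F1 F2 by auto
    then have "tuples k \<inter> \<Inter>?F \<noteq> {}" using H(3) unfolding fipk_def by blast
    then obtain x where x: "x \<in> tuples k" "x \<in> \<Inter>?F" by blast
    show False
    proof (cases "x \<in> X")
      case True
      then have "x \<in> tuples k \<inter> \<Inter>F1" using x by blast
      then show False using F1 by blast
    next
      case False
      then have "x \<in> tuples k \<inter> \<Inter>F2" using x by blast
      then show False using F2 by blast
    qed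
  qed
  have "is_type M k UNIV H"
    unfolding is_type_def using H(2) T E I U Co by blast
  then show ?thesis using H(1) by blast
qed

lemma meas1_inter:
  fixes M :: "('f,'r,'u) struct"
  assumes km: "kmeasure M k C \<nu>"
  shows "finite F \<Longrightarrow> F \<subseteq> {X \<in> Dset M k C. \<nu> X = 1} \<Longrightarrow>
    tuples k \<inter> \<Inter>F \<in> Dset M k C \<and> \<nu> (tuples k \<inter> \<Inter>F) = 1"
proof (induction F rule: finite_induct)
  case empty then show ?case using Dset_tuples km_T[OF km] by simp
next
  case (insert X F)
  then have X: "X \<in> Dset M k C" "\<nu> X = 1" and IH: "tuples k \<inter> \<Inter>F \<in> Dset M k C"
    "\<nu> (tuples k \<inter> \<Inter>F) = 1" by auto
  have e: "tuples k \<inter> \<Inter>(insert X F) = (tuples k \<inter> \<Inter>F) \<inter> X" by auto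
  show ?case unfolding e using Dset_int[OF IH(1) X(1)] km_int1[OF km IH(1) X(1) X(2)] IH(2) by simp
qed

lemma supp_I:
  fixes M :: "('f,'r,'u) struct"
  assumes km: "kmeasure M k UNIV \<nu>" and q: "is_type M k UNIV q"
    and G: "{X \<in> Dset M k UNIV. \<nu> X = 1} \<subseteq> q"
  shows "q \<in> supp M k \<nu>"
proof -
  have "0 < \<nu> \<psi>" if psi: "\<psi> \<in> q" for \<psi>
  proof (rule ccontr)
    assume "\<not> 0 < \<nu> \<psi>"
    moreover have D: "\<psi> \<in> Dset M k UNIV" using q psi unfolding is_type_def by blast
    ultimately have "\<nu> \<psi> = 0" using km_nn[OF km] by force
    then have "\<nu> (tuples k - \<psi>) = 1" using km_compl[OF km D] by simp
    then have "tuples k - \<psi> \<in> q" using G Dset_compl[OF D] by blast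
    then have "\<psi> \<inter> (tuples k - \<psi>) \<in> q" using q psi unfolding is_type_def by blast
    moreover have "\<psi> \<inter> (tuples k - \<psi>) = {}" by blast
    ultimately show False using q unfolding is_type_def by simp
  qed
  then show ?thesis unfolding supp_def using q by blast
qed

lemma sep_meas:
  fixes M :: "('f,'r,'u) struct"
  assumes k1: "kmeasure M k UNIV \<nu>1" and k2: "kmeasure M k UNIV \<nu>2"
    and d: "supp M k \<nu>1 \<inter> supp M k \<nu>2 = {}"
  shows "\<exists>\<psi>\<in>Dset M k UNIV. \<nu>1 \<psi> = 1 \<and> \<nu>2 \<psi> = 0"
proof -
  let ?G1 = "{X \<in> Dset M k UNIV. \<nu>1 X = 1}" and ?G2 = "{X \<in> Dset M k UNIV. \<nu>2 X = 1}"
  show ?thesis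
  proof (cases "fipk k (?G1 \<union> ?G2)")
    case True
    then obtain q where q: "is_type M k UNIV q" "?G1 \<union> ?G2 \<subseteq> q"
      using ultra[of "?G1 \<union> ?G2" M k] by blast
    then have "q \<in> supp M k \<nu>1" "q \<in> supp M k \<nu>2"
      using supp_I[OF k1 q(1)] supp_I[OF k2 q(1)] by blast+
    then show ?thesis using d by blast
  next
    case False
    then obtain F where F: "F \<subseteq> ?G1 \<union> ?G2" "finite F" "tuples k \<inter> \<Inter>F = {}"
      unfolding fipk_def by blast
    let ?F1 = "F \<inter> ?G1" and ?F2 = "F - ?G1"
    have f1: "tuples k \<inter> \<Inter>?F1 \<in> Dset M k UNIV \<and> \<nu>1 (tuples k \<inter> \<Inter>?F1) = 1"
      using meas1_inter[OF k1, of ?F1] F(2) by blast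
    have f2: "tuples k \<inter> \<Inter>?F2 \<in> Dset M k UNIV \<and> \<nu>2 (tuples k \<inter> \<Inter>?F2) = 1"
      using meas1_inter[OF k2, of ?F2] F(1,2) by blast
    have "F = ?F1 \<union> ?F2" by blast
    then have "(tuples k \<inter> \<Inter>?F1) \<inter> (tuples k \<inter> \<Inter>?F2) = tuples k \<inter> \<Inter>F" by auto
    then have sub: "tuples k \<inter> \<Inter>?F1 \<subseteq> tuples k - (tuples k \<inter> \<Inter>?F2)" using F(3) by blast
    have "\<nu>2 (tuples k \<inter> \<Inter>?F1) \<le> \<nu>2 (tuples k - (tuples k \<inter> \<Inter>?F2))"
      using f1 f2 sub by (intro km_mono[OF k2] Dset_compl) auto
    also have "\<dots> = 0" using km_compl[OF k2] f2 by simp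
    finally have "\<nu>2 (tuples k \<inter> \<Inter>?F1) = 0" using km_nn[OF k2] f1 by force
    then show ?thesis using f1 by blast
  qed
qed

lemma type_ne:
  fixes M :: "('f,'r,'u) struct"
  assumes q0: "is_type M k UNIV q0" and q: "is_type M k UNIV q" and ne: "q \<noteq> q0"
  shows "\<exists>Y\<in>q0. Y \<notin> q"
proof (rule ccontr)
  assume "\<not> (\<exists>Y\<in>q0. Y \<notin> q)"
  then have s: "q0 \<subseteq> q" by blast
  have "q \<subseteq> q0"
  proof
    fix Z assume Z: "Z \<in> q"
    then have D: "Z \<in> Dset M k UNIV" using q unfolding is_type_def by blast
    show "Z \<in> q0"
    proof (rule ccontr)
      assume "Z \<notin> q0"
      then have "tuples k - Z \<in> q" using q0 D s unfolding is_type_def by blast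
      then have "Z \<inter> (tuples k - Z) \<in> q" using q Z unfolding is_type_def by blast
      moreover have "Z \<inter> (tuples k - Z) = {}" by blast
      ultimately show False using q unfolding is_type_def by simp
    qed
  qed
  then show False using s ne by blast
qed

lemma type_sep:
  fixes M :: "('f,'r,'u) struct"
  assumes q0: "is_type M k UNIV q0"
  shows "(\<forall>q\<in>set qs. is_type M k UNIV q) \<Longrightarrow> q0 \<notin> set qs \<Longrightarrow> \<exists>\<psi>\<in>q0. \<forall>q\<in>set qs. \<psi> \<notin> q"
proof (induction qs)
  case Nil then show ?case using q0 unfolding is_type_def by auto
next
  case (Cons q qs)
  then obtain \<psi> where p: "\<psi> \<in> q0" "\<forall>q\<in>set qs. \<psi> \<notin> q" by auto
  have "is_type M k UNIV q" "q \<noteq> q0" using Cons.prems by auto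
  then obtain Y where Y: "Y \<in> q0" "Y \<notin> q" using type_ne[OF q0] by blast
  have i: "\<psi> \<inter> Y \<in> q0" using q0 p Y unfolding is_type_def by blast
  have "\<psi> \<inter> Y \<notin> q'" if "q' \<in> set (q # qs)" for q'
  proof
    assume a: "\<psi> \<inter> Y \<in> q'"
    have t: "is_type M k UNIV q'" using that Cons.prems by auto
    have DY: "Y \<in> Dset M k UNIV" "\<psi> \<in> Dset M k UNIV" using q0 Y p unfolding is_type_def by blast+
    have "Y \<in> q'" "\<psi> \<in> q'" using t a DY unfolding is_type_def by blast+
    then show False using that p Y by auto
  qed
  then show ?case using i by blast
qed



definition SEw :: "('f, 'r, 'u) struct \<Rightarrow> nat \<Rightarrow> nat \<Rightarrow> 'u set \<Rightarrow> 'u list set set \<Rightarrow>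
    ('u list set \<Rightarrow> real) \<Rightarrow> ('u list set \<Rightarrow> real) \<Rightarrow> bool" where
  "SEw M n m C p \<nu> \<omega>0 \<longleftrightarrow> kmeasure M (n + m) UNIV \<omega>0 \<and> meq M n UNIV (pi_x n m \<omega>0) (dirac p) \<and>
     (\<forall>\<omega>. kmeasure M (n + m) UNIV \<omega> \<and> meq M (n + m) C \<omega> \<omega>0 \<and>
           meq M n UNIV (pi_x n m \<omega>) (dirac p) \<longrightarrow> meq M m UNIV (pi_y n m \<omega>) \<nu>)"

lemma SEw_mono:
  assumes S: "SEw M n m C p \<nu> \<omega>0" and CC: "C \<subseteq> C'" shows "SEw M n m C' p \<nu> \<omega>0"
proof -
  have "meq M (n + m) C \<omega> \<omega>0" if "meq M (n + m) C' \<omega> \<omega>0" for \<omega>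
    using that Dset_mono[OF CC, of M "n + m"] unfolding meq_def by blast
  then show ?thesis using S unfolding SEw_def by blast
qed

lemma SEw_self:
  assumes S: "SEw M n m C p \<nu> \<omega>0" shows "meq M m UNIV (pi_y n m \<omega>0) \<nu>"
  using S unfolding SEw_def meq_def by blast

lemma SEw_E:
  assumes S: "SEw M n m C p \<nu> \<omega>0" shows "E_dom M n m C (dirac p) \<nu>"
proof -
  have k: "kmeasure M (n + m) C \<omega>0" using S kmeasure_mono unfolding SEw_def by blast
  have "meq M n C (pi_x n m \<omega>0) (dirac p)"
    using S Dset_mono[of C UNIV M n] unfolding SEw_def meq_def by blast
  then show ?thesis unfolding E_dom_def using k S unfolding SEw_def by blast
qed

lemma E_cases:
  assumes E: "E_dom M n m C (dirac p) \<nu>"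
  shows "(\<forall>\<nu>'. E_dom M n m C (dirac p) \<nu>') \<or> (\<exists>\<omega>0. SEw M n m C p \<nu> \<omega>0)"
proof -
  obtain lam where l: "kmeasure M (n + m) C lam" "meq M n C (pi_x n m lam) (dirac p)"
    and ext: "\<And>\<omega>. kmeasure M (n + m) UNIV \<omega> \<and> meq M (n + m) C \<omega> lam \<and>
              meq M n UNIV (pi_x n m \<omega>) (dirac p) \<Longrightarrow> meq M m UNIV (pi_y n m \<omega>) \<nu>"
    using E unfolding E_dom_def by blast
  show ?thesis
  proof (cases "\<exists>\<omega>. kmeasure M (n + m) UNIV \<omega> \<and> meq M (n + m) C \<omega> lam \<and>
              meq M n UNIV (pi_x n m \<omega>) (dirac p)")
    case True
    then obtain \<omega>0 where w: "kmeasure M (n + m) UNIV \<omega>0" "meq M (n + m) C \<omega>0 lam"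
      "meq M n UNIV (pi_x n m \<omega>0) (dirac p)" by blast
    have "meq M m UNIV (pi_y n m \<omega>) \<nu>" if "kmeasure M (n + m) UNIV \<omega>" "meq M (n + m) C \<omega> \<omega>0"
      "meq M n UNIV (pi_x n m \<omega>) (dirac p)" for \<omega>
    proof -
      have "meq M (n + m) C \<omega> lam" using that(2) w(2) unfolding meq_def by simp
      then show ?thesis using ext that by blast
    qed
    then have "SEw M n m C p \<nu> \<omega>0" unfolding SEw_def using w by blast
    then show ?thesis by blast
  next
    case False
    then have "E_dom M n m C (dirac p) \<nu>'" for \<nu>' unfolding E_dom_def using l by blast
    then show ?thesis by blast
  qed
qed

lemma half:
  assumes om: "kmeasure M (n + m) UNIV \<omega>" and px: "meq M n UNIV (pi_x n m \<omega>) (dirac p)"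
    and p: "is_type M n UNIV p"
    and Psi: "\<Psi> \<in> Dset M (n + m) UNIV" and oP: "\<omega> \<Psi> = r" and r: "r > 0"
    and ag: "\<And>X. X \<in> Dset M (n + m) C \<Longrightarrow> \<omega> (X \<inter> \<Psi>) = r * \<omega>a X"
    and S: "SEw M n m C p \<nu>a \<omega>a"
    and Y: "Y \<in> Dset M m UNIV"
  shows "\<omega> (cyly n m Y \<inter> \<Psi>) = r * \<nu>a Y"
proof -
  define \<omega>' where "\<omega>' X = \<omega> (X \<inter> \<Psi>) / r" for X
  have k': "kmeasure M (n + m) UNIV \<omega>'"
  proof -
    have "tuples (n + m) \<inter> \<Psi> = \<Psi>" using Dset_sub[OF Psi] by blast
    then have h1: "\<omega>' (tuples (n + m)) = 1" using oP r by (simp add: \<omega>'_def)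
    have h2: "0 \<le> \<omega>' X" if "X \<in> Dset M (n + m) UNIV" for X
      using km_nn[OF om Dset_int[OF that Psi]] r by (simp add: \<omega>'_def)
    have h3: "\<omega>' (X \<union> Z) = \<omega>' X + \<omega>' Z" if X: "X \<in> Dset M (n + m) UNIV" and Z: "Z \<in> Dset M (n + m) UNIV"
      and d: "X \<inter> Z = {}" for X Z
    proof -
      have "(X \<union> Z) \<inter> \<Psi> = (X \<inter> \<Psi>) \<union> (Z \<inter> \<Psi>)" by blast
      moreover have "(X \<inter> \<Psi>) \<inter> (Z \<inter> \<Psi>) = {}" using d by blast
      ultimately have "\<omega> ((X \<union> Z) \<inter> \<Psi>) = \<omega> (X \<inter> \<Psi>) + \<omega> (Z \<inter> \<Psi>)"
        using km_add[OF om Dset_int[OF X Psi] Dset_int[OF Z Psi]] by simp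
      then show ?thesis by (simp add: \<omega>'_def add_divide_distrib)
    qed
    show ?thesis unfolding kmeasure_def using h1 h2 h3 by blast
  qed
  have m1: "meq M (n + m) C \<omega>' \<omega>a"
    unfolding meq_def \<omega>'_def using ag r by simp
  have m2: "meq M n UNIV (pi_x n m \<omega>') (dirac p)"
    unfolding meq_def
  proof
    fix X assume X: "X \<in> Dset M n UNIV"
    have cX: "cylx n m X \<in> Dset M (n + m) UNIV" using Dset_cylx[OF X] .
    have oX: "\<omega> (cylx n m X) = dirac p X" using px X unfolding meq_def pi_x_cyl by blast
    show "pi_x n m \<omega>' X = dirac p X"
    proof (cases "X \<in> p")
      case True
      then have "\<omega> (cylx n m X) = 1" using oX by (simp add: dirac_def)
      then have "\<omega> (\<Psi> \<inter> cylx n m X) = \<omega> \<Psi>" using km_int1[OF om Psi cX] by simp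
      then have "\<omega> (cylx n m X \<inter> \<Psi>) = r" using oP by (simp add: Int_commute)
      then show ?thesis using True r by (simp add: pi_x_cyl \<omega>'_def dirac_def)
    next
      case False
      then have "\<omega> (cylx n m X) = 0" using oX by (simp add: dirac_def)
      then have "\<omega> (\<Psi> \<inter> cylx n m X) = 0" using km_int0[OF om Psi cX] by simp
      then have "\<omega> (cylx n m X \<inter> \<Psi>) = 0" by (simp add: Int_commute)
      then show ?thesis using False by (simp add: pi_x_cyl \<omega>'_def dirac_def)
    qed
  qed
  have "meq M m UNIV (pi_y n m \<omega>') \<nu>a" using S k' m1 m2 unfolding SEw_def by blast
  then have "\<omega>' (cyly n m Y) = \<nu>a Y" using Y unfolding meq_def pi_y_cyl by blast
  then show ?thesis using r by (simp add: \<omega>'_def field_simps)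
qed

lemma bin:
  assumes S1: "SEw M n m C p \<nu>1 \<omega>1" and S2: "SEw M n m C p \<nu>2 \<omega>2"
    and p: "is_type M n UNIV p"
    and Psi: "\<Psi> \<in> Dset M (n + m) C" and o1: "\<omega>1 \<Psi> = 1" and o2: "\<omega>2 \<Psi> = 0"
    and rs: "0 \<le> r" "0 \<le> s" "r + s = 1"
  shows "SEw M n m C p (\<lambda>X. r * \<nu>1 X + s * \<nu>2 X) (\<lambda>X. r * \<omega>1 X + s * \<omega>2 X)"
proof -
  let ?l = "\<lambda>X. r * \<omega>1 X + s * \<omega>2 X"
  have k1: "kmeasure M (n + m) UNIV \<omega>1" and k2: "kmeasure M (n + m) UNIV \<omega>2"
    using S1 S2 unfolding SEw_def by blast+
  have kl: "kmeasure M (n + m) UNIV ?l" by (rule kmeasure_conv[OF k1 k2 rs])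
  have pl: "meq M n UNIV (pi_x n m ?l) (dirac p)"
  proof -
    have "\<omega>1 (cylx n m X) = dirac p X" "\<omega>2 (cylx n m X) = dirac p X" if "X \<in> Dset M n UNIV" for X
      using S1 S2 that unfolding SEw_def meq_def pi_x_cyl by blast+
    then show ?thesis unfolding meq_def pi_x_cyl using rs(3)
      by (metis distrib_right mult_1)
  qed
  have PsiU: "\<Psi> \<in> Dset M (n + m) UNIV" using Psi Dset_mono[of C UNIV] by blast
  let ?P' = "tuples (n + m) - \<Psi>"
  have P'C: "?P' \<in> Dset M (n + m) C" using Dset_compl[OF Psi] .
  have P'U: "?P' \<in> Dset M (n + m) UNIV" using Dset_compl[OF PsiU] .
  have o1': "\<omega>1 ?P' = 0" using km_compl[OF k1 PsiU] o1 by simp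
  have o2': "\<omega>2 ?P' = 1" using km_compl[OF k2 PsiU] o2 by simp
  have main: "meq M m UNIV (pi_y n m \<omega>) (\<lambda>X. r * \<nu>1 X + s * \<nu>2 X)"
    if om: "kmeasure M (n + m) UNIV \<omega>" and ag: "meq M (n + m) C \<omega> ?l"
      and px: "meq M n UNIV (pi_x n m \<omega>) (dirac p)" for \<omega>
  proof -
    have DCU: "X \<in> Dset M (n + m) UNIV" if "X \<in> Dset M (n + m) C" for X
      using that Dset_mono[of C UNIV] by blast
    have agX: "\<omega> X = ?l X" if "X \<in> Dset M (n + m) C" for X using ag that unfolding meq_def by blast
    have oPsi: "\<omega> \<Psi> = r" using agX[OF Psi] o1 o2 by simp
    have oP': "\<omega> ?P' = s" using km_compl[OF om PsiU] oPsi rs(3) by simp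
    have ag1: "\<omega> (X \<inter> \<Psi>) = r * \<omega>1 X" if X: "X \<in> Dset M (n + m) C" for X
    proof -
      have "\<omega> (X \<inter> \<Psi>) = ?l (X \<inter> \<Psi>)" using agX[OF Dset_int[OF X Psi]] .
      moreover have "\<omega>1 (X \<inter> \<Psi>) = \<omega>1 X" using km_int1[OF k1 DCU[OF X] PsiU o1] .
      moreover have "\<omega>2 (X \<inter> \<Psi>) = 0" using km_int0[OF k2 DCU[OF X] PsiU o2] .
      ultimately show ?thesis by simp
    qed
    have ag2: "\<omega> (X \<inter> ?P') = s * \<omega>2 X" if X: "X \<in> Dset M (n + m) C" for X
    proof -
      have "\<omega> (X \<inter> ?P') = ?l (X \<inter> ?P')" using agX[OF Dset_int[OF X P'C]] .
      moreover have "\<omega>2 (X \<inter> ?P') = \<omega>2 X" using km_int1[OF k2 DCU[OF X] P'U o2'] .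
      moreover have "\<omega>1 (X \<inter> ?P') = 0" using km_int0[OF k1 DCU[OF X] P'U o1'] .
      ultimately show ?thesis by simp
    qed
    show ?thesis unfolding meq_def pi_y_cyl
    proof
      fix Y assume Y: "Y \<in> Dset M m UNIV"
      have cY: "cyly n m Y \<in> Dset M (n + m) UNIV" using Dset_cyly[OF Y] .
      have a: "\<omega> (cyly n m Y \<inter> \<Psi>) = r * \<nu>1 Y"
      proof (cases "r > 0")
        case True
        show ?thesis by (rule half[OF om px p PsiU oPsi True ag1 S1 Y])
      next
        case False
        then have r0: "r = 0" using rs by simp
        have "\<omega> (cyly n m Y \<inter> \<Psi>) = 0" using km_int0[OF om cY PsiU] oPsi r0 by simp
        then show ?thesis using r0 by simp
      qed
      have b: "\<omega> (cyly n m Y \<inter> ?P') = s * \<nu>2 Y"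
      proof (cases "s > 0")
        case True
        show ?thesis by (rule half[OF om px p P'U oP' True ag2 S2 Y])
      next
        case False
        then have s0: "s = 0" using rs by simp
        have "\<omega> (cyly n m Y \<inter> ?P') = 0" using km_int0[OF om cY P'U] oP' s0 by simp
        then show ?thesis using s0 by simp
      qed
      have "cyly n m Y - \<Psi> = cyly n m Y \<inter> ?P'" using cyly_sub by blast
      then have "\<omega> (cyly n m Y) = \<omega> (cyly n m Y \<inter> \<Psi>) + \<omega> (cyly n m Y \<inter> ?P')"
        using km_diff[OF om cY PsiU] by simp
      then show "\<omega> (cyly n m Y) = r * \<nu>1 Y + s * \<nu>2 Y" using a b by simp
    qed
  qed
  show ?thesis unfolding SEw_def using kl pl main by blast
qed



lemma D_case:
  fixes M :: "('f,'r,'u) struct"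
  assumes p: "is_type M n UNIV p" and q: "is_type M m UNIV q" and D: "D_dom M n m A p q"
  shows "(\<forall>\<nu>'. E_dom M n m A (dirac p) \<nu>') \<or> (\<exists>\<omega>0. SEw M n m A p (dirac q) \<omega>0)"
proof -
  obtain \<rho> where rho: "is_type M (n + m) A \<rho>"
    and cx: "\<And>X. X \<in> p \<inter> Dset M n A \<Longrightarrow> cylx n m X \<in> \<rho>"
    and dd: "\<And>Y. Y \<in> q \<Longrightarrow> \<exists>X\<in>p. \<exists>Z\<in>\<rho>. cylx n m X \<inter> Z \<subseteq> {ab. drop n ab \<in> Y}"
    using D unfolding D_dom_def cylx_def by blast
  have rsub: "\<rho> \<subseteq> Dset M (n + m) A" and rE: "{} \<notin> \<rho>"
    and rI: "\<And>X Y. X \<in> \<rho> \<Longrightarrow> Y \<in> \<rho> \<Longrightarrow> X \<inter> Y \<in> \<rho>"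
    using rho unfolding is_type_def by blast+
  have psub: "p \<subseteq> Dset M n UNIV"
    and pC: "\<And>X. X \<in> Dset M n UNIV \<Longrightarrow> X \<in> p \<or> tuples n - X \<in> p"
    using p unfolding is_type_def by blast+
  have qsub: "q \<subseteq> Dset M m UNIV"
    and qC: "\<And>X. X \<in> Dset M m UNIV \<Longrightarrow> X \<in> q \<or> tuples m - X \<in> q"
    using q unfolding is_type_def by blast+
  have kl: "kmeasure M (n + m) A (dirac \<rho>)" by (rule dirac_kmeasure[OF rho])
  have pl: "meq M n A (pi_x n m (dirac \<rho>)) (dirac p)"
    unfolding meq_def pi_x_cyl
  proof
    fix X assume X: "X \<in> Dset M n A"
    have XU: "X \<in> Dset M n UNIV" using X Dset_mono[of A UNIV] by blast
    show "dirac \<rho> (cylx n m X) = dirac p X"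
    proof (cases "X \<in> p")
      case True
      then show ?thesis using cx X by (simp add: dirac_def)
    next
      case False
      then have "tuples n - X \<in> p" using pC XU by blast
      then have c2: "cylx n m (tuples n - X) \<in> \<rho>" using cx Dset_compl[OF X] by blast
      have "cylx n m X \<notin> \<rho>"
      proof
        assume "cylx n m X \<in> \<rho>"
        then have "cylx n m X \<inter> cylx n m (tuples n - X) \<in> \<rho>" using rI c2 by blast
        moreover have "cylx n m X \<inter> cylx n m (tuples n - X) = {}" by (auto simp: cylx_def)
        ultimately show False using rE by simp
      qed
      then show ?thesis using False by (simp add: dirac_def)
    qed
  qed
  show ?thesis
  proof (cases "\<exists>\<omega>. kmeasure M (n + m) UNIV \<omega> \<and> meq M (n + m) A \<omega> (dirac \<rho>) \<and>
              meq M n UNIV (pi_x n m \<omega>) (dirac p)")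
    case False
    then have "E_dom M n m A (dirac p) \<nu>'" for \<nu>' unfolding E_dom_def using kl pl by blast
    then show ?thesis by blast
  next
    case True
    then obtain \<omega>0 where w: "kmeasure M (n + m) UNIV \<omega>0" "meq M (n + m) A \<omega>0 (dirac \<rho>)"
      "meq M n UNIV (pi_x n m \<omega>0) (dirac p)" by blast
    have main: "meq M m UNIV (pi_y n m \<omega>) (dirac q)"
      if om: "kmeasure M (n + m) UNIV \<omega>" and ag: "meq M (n + m) A \<omega> \<omega>0"
        and px: "meq M n UNIV (pi_x n m \<omega>) (dirac p)" for \<omega>
    proof -
      have one: "\<omega> (cyly n m Y) = 1" if Y: "Y \<in> q" for Y
      proof -
        obtain X Z where XZ: "X \<in> p" "Z \<in> \<rho>" "cylx n m X \<inter> Z \<subseteq> {ab. drop n ab \<in> Y}"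
          using dd[OF Y] by blast
        have XU: "X \<in> Dset M n UNIV" using XZ psub by blast
        have ZA: "Z \<in> Dset M (n + m) A" using XZ rsub by blast
        have ZU: "Z \<in> Dset M (n + m) UNIV" using ZA Dset_mono[of A UNIV] by blast
        have YU: "Y \<in> Dset M m UNIV" using Y qsub by blast
        have cX: "cylx n m X \<in> Dset M (n + m) UNIV" using Dset_cylx[OF XU] .
        have cY: "cyly n m Y \<in> Dset M (n + m) UNIV" using Dset_cyly[OF YU] .
        have oZ: "\<omega> Z = 1"
        proof -
          have "\<omega> Z = \<omega>0 Z" using ag ZA unfolding meq_def by blast
          also have "\<dots> = dirac \<rho> Z" using w(2) ZA unfolding meq_def by blast
          finally show ?thesis using XZ(2) by (simp add: dirac_def)
        qed
        have oX: "\<omega> (cylx n m X) = 1"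
          using px XU XZ(1) unfolding meq_def pi_x_cyl by (simp add: dirac_def)
        have "\<omega> (cylx n m X \<inter> Z) = 1" using km_int1[OF om cX ZU oZ] oX by simp
        moreover have "cylx n m X \<inter> Z \<subseteq> cyly n m Y"
          using XZ(3) Dset_sub[OF ZU] by (auto simp: cyly_def tuples_def)
        ultimately have "1 \<le> \<omega> (cyly n m Y)"
          using km_mono[OF om Dset_int[OF cX ZU] cY] by simp
        then show ?thesis using km_le1[OF om cY] by simp
      qed
      show ?thesis unfolding meq_def pi_y_cyl
      proof
        fix Y assume YU: "Y \<in> Dset M m UNIV"
        show "\<omega> (cyly n m Y) = dirac q Y"
        proof (cases "Y \<in> q")
          case True then show ?thesis using one by (simp add: dirac_def)
        next
          case False
          then have "tuples m - Y \<in> q" using qC YU by blast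
          then have "\<omega> (cyly n m (tuples m - Y)) = 1" using one by blast
          then have "\<omega> (tuples (n + m) - cyly n m Y) = 1" by (simp add: cyly_compl)
          then have "\<omega> (cyly n m Y) = 0" using km_compl[OF om Dset_cyly[OF YU]] by simp
          then show ?thesis using False by (simp add: dirac_def)
        qed
      qed
    qed
    have "SEw M n m A p (dirac q) \<omega>0" unfolding SEw_def using w(1,3) main by blast
    then show ?thesis by blast
  qed
qed

definition ds :: "'u list set set list \<Rightarrow> real list \<Rightarrow> 'u list set \<Rightarrow> real" where
  "ds qs rs X = (\<Sum>i<length qs. rs ! i * dirac (qs ! i) X)"

lemma ds_cons: "ds (q # qs) (r # rs) X = r * dirac q X + ds qs rs X"
  unfolding ds_def by (simp only: length_Cons sum.lessThan_Suc_shift) simp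

lemma sum_list_upd: "j < length xs \<Longrightarrow> sum_list (xs[j := xs ! j + d]) = sum_list xs + (d::real)"
proof (induction xs arbitrary: j)
  case Nil then show ?case by simp
next
  case (Cons a xs) then show ?case by (cases j) auto
qed

lemma sum_list_div: "sum_list (map (\<lambda>x. x / t) xs) = sum_list xs / (t::real)"
  by (induction xs) (auto simp: add_divide_distrib)

lemma list_main:
  fixes M :: "('f,'r,'u) struct"
  assumes p: "is_type M n UNIV p"
  shows "(\<forall>q\<in>set qs. is_type M m UNIV q \<and> (\<exists>\<omega>0. SEw M n m A p (dirac q) \<omega>0)) \<Longrightarrow>
    length rs = length qs \<Longrightarrow> (\<forall>x\<in>set rs. 0 \<le> x) \<Longrightarrow> sum_list rs = 1 \<Longrightarrow>
    \<exists>b \<omega>0. SEw M n m (A \<union> set b) p (ds qs rs) \<omega>0"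
proof (induction qs arbitrary: rs)
  case Nil then show ?case by simp
next
  case (Cons q0 qs')
  obtain r0 rs' where rs: "rs = r0 # rs'" using Cons.prems(2) by (cases rs) auto
  have len: "length rs' = length qs'" using Cons.prems(2) rs by simp
  have nn: "\<forall>x\<in>set rs'. 0 \<le> x" "0 \<le> r0" using Cons.prems(3) rs by auto
  have sum1: "r0 + sum_list rs' = 1" using Cons.prems(4) rs by simp
  have hq: "\<forall>q\<in>set qs'. is_type M m UNIV q \<and> (\<exists>\<omega>0. SEw M n m A p (dirac q) \<omega>0)"
    using Cons.prems(1) by simp
  have q0: "is_type M m UNIV q0" "\<exists>\<omega>0. SEw M n m A p (dirac q0) \<omega>0" using Cons.prems(1) by auto
  show ?case
  proof (cases "q0 \<in> set qs'")
    case True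
    then obtain j where j: "j < length qs'" "qs' ! j = q0" by (auto simp: in_set_conv_nth)
    define rs2 where "rs2 = rs'[j := rs' ! j + r0]"
    have l2: "length rs2 = length qs'" using len by (simp add: rs2_def)
    have n2: "\<forall>x\<in>set rs2. 0 \<le> x"
    proof
      fix x assume "x \<in> set rs2"
      then obtain i where i: "i < length rs2" "rs2 ! i = x" by (auto simp: in_set_conv_nth)
      show "0 \<le> x"
      proof (cases "i = j")
        case True
        then have "x = rs' ! j + r0" using i j len by (simp add: rs2_def)
        moreover have "0 \<le> rs' ! j" using nn j len by simp
        ultimately show ?thesis using nn by simp
      next
        case False
        then have "x = rs' ! i" using i by (simp add: rs2_def)
        then show ?thesis using nn i l2 len by simp
      qed
    qed
    have s2: "sum_list rs2 = 1" using sum_list_upd[of j rs' r0] j len sum1 by (simp add: rs2_def)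
    obtain b \<omega>0 where S: "SEw M n m (A \<union> set b) p (ds qs' rs2) \<omega>0"
      using Cons.IH[OF hq l2 n2 s2] by blast
    have "ds qs' rs2 X = ds (q0 # qs') rs X" for X
    proof -
      have "\<And>i. i \<in> {..<length qs'} \<Longrightarrow> rs2 ! i * dirac (qs' ! i) X =
          rs' ! i * dirac (qs' ! i) X + (if i = j then r0 * dirac q0 X else 0)"
        using j len by (auto simp: rs2_def nth_list_update algebra_simps)
      then have "ds qs' rs2 X = (\<Sum>i<length qs'. rs' ! i * dirac (qs' ! i) X +
          (if i = j then r0 * dirac q0 X else 0))" unfolding ds_def by (rule sum.cong[OF refl])
      also have "\<dots> = ds qs' rs' X + r0 * dirac q0 X"
        using j by (simp add: sum.distrib ds_def)
      finally show ?thesis by (simp add: rs ds_cons)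
    qed
    then have "ds qs' rs2 = ds (q0 # qs') rs" by (rule ext)
    then show ?thesis using S by metis
  next
    case False
    define t where "t = sum_list rs'"
    have t0: "0 \<le> t" unfolding t_def using nn(1) by (simp add: sum_list_nonneg)
    show ?thesis
    proof (cases "t = 0")
      case True
      then have "\<forall>x\<in>set rs'. x = 0" using nn(1) sum_list_nonneg_eq_0_iff unfolding t_def by blast
      then have z0: "rs' ! i = 0" if "i < length qs'" for i using that len nth_mem by metis
      have z: "ds qs' rs' X = 0" for X unfolding ds_def by (intro sum.neutral) (simp add: z0)
      have "r0 = 1" using sum1 True t_def by simp
      then have "ds (q0 # qs') rs = dirac q0" using z by (simp add: rs ds_cons fun_eq_iff)
      then show ?thesis using q0(2) by (metis Un_empty_right empty_set)
    next
      case tpos: False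
      then have tp: "t > 0" using t0 by simp
      define rs3 where "rs3 = map (\<lambda>x. x / t) rs'"
      have l3: "length rs3 = length qs'" using len by (simp add: rs3_def)
      have n3: "\<forall>x\<in>set rs3. 0 \<le> x" using nn(1) t0 by (auto simp: rs3_def)
      have s3: "sum_list rs3 = 1" using tp by (simp add: rs3_def sum_list_div t_def[symmetric])
      obtain b' \<omega>' where S': "SEw M n m (A \<union> set b') p (ds qs' rs3) \<omega>'"
        using Cons.IH[OF hq l3 n3 s3] by blast
      have d3: "ds qs' rs3 X = ds qs' rs' X / t" for X
        unfolding ds_def rs3_def using len by (simp add: sum_divide_distrib)
      obtain \<psi> where psi: "\<psi> \<in> q0" "\<forall>q\<in>set qs'. \<psi> \<notin> q"
        using type_sep[OF q0(1), of qs'] hq False by blast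
      have psiU: "\<psi> \<in> Dset M m UNIV" using psi q0(1) unfolding is_type_def by blast
      obtain c where c: "\<psi> \<in> Dset M m (set c)" using Dset_params[OF psiU] by blast
      define C where "C = A \<union> set (b' @ c)"
      obtain \<omega>q where Sq: "SEw M n m A p (dirac q0) \<omega>q" using q0(2) by blast
      have Sq': "SEw M n m C p (dirac q0) \<omega>q" by (rule SEw_mono[OF Sq]) (auto simp: C_def)
      have S'': "SEw M n m C p (ds qs' rs3) \<omega>'" by (rule SEw_mono[OF S']) (auto simp: C_def)
      have psiC: "\<psi> \<in> Dset M m C" using c Dset_mono[of "set c" C M m] by (auto simp: C_def)
      have PsiC: "cyly n m \<psi> \<in> Dset M (n + m) C" using Dset_cyly[OF psiC] .
      have o1: "\<omega>q (cyly n m \<psi>) = 1"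
        using SEw_self[OF Sq] psiU psi(1) unfolding meq_def pi_y_cyl by (simp add: dirac_def)
      have "ds qs' rs3 \<psi> = 0" unfolding ds_def using psi(2) by (simp add: dirac_def nth_mem)
      then have o2: "\<omega>' (cyly n m \<psi>) = 0"
        using SEw_self[OF S'] psiU unfolding meq_def pi_y_cyl by simp
      have B: "SEw M n m C p (\<lambda>X. r0 * dirac q0 X + t * ds qs' rs3 X) (\<lambda>X. r0 * \<omega>q X + t * \<omega>' X)"
        by (rule bin[OF Sq' S'' p PsiC o1 o2 nn(2) t0]) (use sum1 t_def in simp)
      have "(\<lambda>X. r0 * dirac q0 X + t * ds qs' rs3 X) = ds (q0 # qs') rs"
        using tp by (simp add: fun_eq_iff d3 rs ds_cons)
      then show ?thesis using B unfolding C_def by metis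
    qed
  qed
qed



theorem corollary5p10:
  fixes M :: "('f, 'r, 'u) struct" and K :: "'k set" and A :: "'u set"
    and n m :: nat and p :: "'u list set set"
  assumes mon: "monster M K"
    and smallA: "small K A"
    and p: "is_type M n UNIV p"
  shows "(\<forall>(r::real) s \<nu>1 \<nu>2. 0 \<le> r \<and> 0 \<le> s \<and> r + s = 1 \<and>
            kmeasure M m UNIV \<nu>1 \<and> kmeasure M m UNIV \<nu>2 \<and>
            supp M m \<nu>1 \<inter> supp M m \<nu>2 = {} \<and>
            E_dom M n m A (dirac p) \<nu>1 \<and> E_dom M n m A (dirac p) \<nu>2 \<longrightarrow>
            (\<exists>b. E_dom M n m (A \<union> set b) (dirac p) (\<lambda>X. r * \<nu>1 X + s * \<nu>2 X)))
       \<and> (\<forall>(qs :: 'u list set set list) (rs :: real list).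
            (\<forall>q\<in>set qs. is_type M m UNIV q \<and> D_dom M n m A p q) \<and>
            length rs = length qs \<and> (\<forall>x\<in>set rs. 0 \<le> x) \<and> sum_list rs = 1 \<longrightarrow>
            (\<exists>b. E_dom M n m (A \<union> set b) (dirac p)
                   (\<lambda>X. \<Sum>i<length qs. rs ! i * dirac (qs ! i) X)))"
proof (intro conjI allI impI)
  fix r s :: real and \<nu>1 \<nu>2
  assume h: "0 \<le> r \<and> 0 \<le> s \<and> r + s = 1 \<and>
            kmeasure M m UNIV \<nu>1 \<and> kmeasure M m UNIV \<nu>2 \<and>
            supp M m \<nu>1 \<inter> supp M m \<nu>2 = {} \<and>
            E_dom M n m A (dirac p) \<nu>1 \<and> E_dom M n m A (dirac p) \<nu>2"
  let ?\<nu> = "\<lambda>X. r * \<nu>1 X + s * \<nu>2 X"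
  have triv: "\<exists>b. E_dom M n m (A \<union> set b) (dirac p) ?\<nu>" if "\<forall>\<nu>'. E_dom M n m A (dirac p) \<nu>'"
    using that by (metis Un_empty_right empty_set)
  show "\<exists>b. E_dom M n m (A \<union> set b) (dirac p) ?\<nu>"
  proof (cases "\<forall>\<nu>'. E_dom M n m A (dirac p) \<nu>'")
    case True then show ?thesis using triv by blast
  next
    case False
    then obtain \<omega>1 where S1: "SEw M n m A p \<nu>1 \<omega>1" using E_cases[of M n m A p \<nu>1] h by blast
    obtain \<omega>2 where S2: "SEw M n m A p \<nu>2 \<omega>2" using E_cases[of M n m A p \<nu>2] h False by blast
    obtain \<psi> where psi: "\<psi> \<in> Dset M m UNIV" "\<nu>1 \<psi> = 1" "\<nu>2 \<psi> = 0"
      using sep_meas[of M m \<nu>1 \<nu>2] h by blast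
    obtain c where c: "\<psi> \<in> Dset M m (set c)" using Dset_params[OF psi(1)] by blast
    define C where "C = A \<union> set c"
    have S1': "SEw M n m C p \<nu>1 \<omega>1" by (rule SEw_mono[OF S1]) (auto simp: C_def)
    have S2': "SEw M n m C p \<nu>2 \<omega>2" by (rule SEw_mono[OF S2]) (auto simp: C_def)
    have psiC: "\<psi> \<in> Dset M m C" using c Dset_mono[of "set c" C M m] by (auto simp: C_def)
    have PsiC: "cyly n m \<psi> \<in> Dset M (n + m) C" using Dset_cyly[OF psiC] .
    have o1: "\<omega>1 (cyly n m \<psi>) = 1"
      using SEw_self[OF S1] psi unfolding meq_def pi_y_cyl by simp
    have o2: "\<omega>2 (cyly n m \<psi>) = 0"
      using SEw_self[OF S2] psi unfolding meq_def pi_y_cyl by simp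
    have "SEw M n m C p ?\<nu> (\<lambda>X. r * \<omega>1 X + s * \<omega>2 X)"
      by (rule bin[OF S1' S2' p PsiC o1 o2]) (use h in simp_all)
    then have "E_dom M n m C (dirac p) ?\<nu>" by (rule SEw_E)
    then show ?thesis unfolding C_def by blast
  qed
next
  fix qs :: "'u list set set list" and rs :: "real list"
  assume h: "(\<forall>q\<in>set qs. is_type M m UNIV q \<and> D_dom M n m A p q) \<and>
            length rs = length qs \<and> (\<forall>x\<in>set rs. 0 \<le> x) \<and> sum_list rs = 1"
  let ?\<nu> = "\<lambda>X. \<Sum>i<length qs. rs ! i * dirac (qs ! i) X"
  show "\<exists>b. E_dom M n m (A \<union> set b) (dirac p) ?\<nu>"
  proof (cases "\<forall>\<nu>'. E_dom M n m A (dirac p) \<nu>'")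
    case True then show ?thesis by (metis Un_empty_right empty_set)
  next
    case False
    have "\<forall>q\<in>set qs. is_type M m UNIV q \<and> (\<exists>\<omega>0. SEw M n m A p (dirac q) \<omega>0)"
      using D_case[OF p] h False by blast
    then obtain b \<omega>0 where "SEw M n m (A \<union> set b) p (ds qs rs) \<omega>0"
      using list_main[OF p, of qs m A rs] h by blast
    then have "E_dom M n m (A \<union> set b) (dirac p) (ds qs rs)" by (rule SEw_E)
    moreover have "ds qs rs = ?\<nu>" by (simp add: fun_eq_iff ds_def)
    ultimately show ?thesis by auto
  qed
qed

end
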